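(* Let $H$ be a real Hilbert space, $I=\{1,\dots,M\}$, let $f_i,h_i,T_i$ ($i\in I$) satisfy Assumption (A1)–(A4) and the parameters satisfy Condition (C) (described below). Consider the sequences generated by the Distributed Accelerated Parallel Algorithm below, and assume that for each $i\in I$ the sequence $\{y^{(i)}_n\}$ is bounded. Then: (a) $\lim_{n\to\infty}\frac{\|x_{n+1}-x_n\|}{\lambda_n}=\lim_{n\to\infty}\|x_{n+1}-x_n\|=0$; (b) for every $\bar x\in S$ and $i\in I$ there exist constants $D_1,D_2\ge0$ such that for all $n$, $$\|w^{(i+1)}_n-\bar x\|^2\le\|x_n-\bar x\|^2+\theta_nD_1+2\lambda_n\big(f_i(\bar x)-f_i(y^{(i)}_n)\big)+2\lambda_n\langle d^{(i)}_{n+1},y^{(i)}_n-\bar x\rangle+\alpha_nD_2-(1-\alpha_n)\|T_i(y^{(i)}_n)-y^{(i)}_n\|^2-\|z_n-y^{(i)}_n\|^2.$$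
   Context: Assumption (A1): each $f_i:H\to\mathbb{R}$ is continuous and convex. (A2): each $h_i:H\to\mathbb{R}$ is convex and Fréchet differentiable, and $\nabla h_i$ is $(1/L_i)$-Lipschitz continuous for some $L_i>0$. (A3): each $T_i:H\to H$ is firmly nonexpansive, i.e. $\|T_ix-T_iy\|^2\le\langle T_ix-T_iy,x-y\rangle$ for all $x,y$. (A4): $S=\bigcap_{i=1}^M\mathrm{Fix}\,T_i\neq\emptyset$ and, with $\psi=\sum_{i=1}^M(f_i+h_i)$, $\Omega=\{\hat x\in S:\psi(\hat x)=\min_{x\in S}\psi(x)\}\neq\emptyset$. Condition (C): $\{\theta_n\},\{\lambda_n\},\{\beta_n\},\{\alpha_n\}$ are decreasing real sequences converging to $0$ with $\theta_n\in[0,1)$, $\lambda_n\in(0,2\min_{i\in I}L_i]$, $\beta_n\in(0,1]$, $\alpha_n\in(0,1]$, and: (C1) $\sum_n\alpha_n=\infty$; (C2) $\lim_n\frac{1}{\alpha_{n+1}}\big|\frac{1}{\lambda_{n+1}}-\frac{1}{\lambda_n}\big|=0$; (C3) $\lim_n\frac{1}{\lambda_{n+1}}\big|1-\frac{\alpha_n}{\alpha_{n+1}}\big|=0$; (C4) $\lim_n\frac{\alpha_n}{\lambda_n}=0$; (C5) $\lim_n\frac{\theta_n}{\alpha_{n+1}\lambda_{n+1}}=0$; (C6) $\frac{\lambda_n}{\lambda_{n+1}}\le\sigma$ for some $\sigma\ge1$; (C7) $\lim_n\frac{\beta_n}{\alpha_{n+1}}=0$. $\mathrm{prox}_{\lambda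 g}(x)=\arg\min_y\{g(y)+\frac{1}{2\lambda}\|x-y\|^2\}$. Distributed Accelerated Parallel Algorithm: choose $z_0,x_0,x_1\in H$, $u^{(i)}\in H$ and set $d^{(i)}_1=-\nabla h_i(z_0)$ ($i\in I$). For $n=1,2,\dots$: compute $z_n=x_n+\theta_n(x_n-x_{n-1})$; for $i=1,\dots,M$ compute $d^{(i)}_{n+1}=-\nabla h_i(z_n)+\beta_nd^{(i)}_n$, $y^{(i)}_n=\mathrm{prox}_{\lambda_nf_i}(z_n+\lambda_nd^{(i)}_{n+1})$, $w^{(i+1)}_n=\alpha_nu^{(i)}+(1-\alpha_n)T_i(y^{(i)}_n)$; then set $x_{n+1}=\frac1M\sum_{i=1}^Mw^{(i+1)}_n$. *)

theory Defs
  imports "HOL-Analysis.Analysis"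
begin

definition prox :: "real \<Rightarrow> ('a::real_normed_vector \<Rightarrow> real) \<Rightarrow> 'a \<Rightarrow> 'a" where
  "prox lam g x = (SOME p. \<forall>y. g p + (1 / (2 * lam)) * (norm (x - p))\<^sup>2
                                  \<le> g y + (1 / (2 * lam)) * (norm (x - y))\<^sup>2)"

definition firmly_nonexpansive :: "('a::real_inner \<Rightarrow> 'a) \<Rightarrow> bool" where
  "firmly_nonexpansive T \<longleftrightarrow>
     (\<forall>x y. (norm (T x - T y))\<^sup>2 \<le> inner (T x - T y) (x - y))"

end

theory Submission
  imports Defs "HOL-Analysis.Analysis"
begin



lemma line_deriv:
  fixes h :: "'a::real_inner \<Rightarrow> real"
  assumes "\<And>v. (h has_derivative (\<lambda>e. inner (G v) e)) (at v)"
  shows "((\<lambda>t. h (x + t *\<^sub>R v)) has_real_derivative inner (G (x + t *\<^sub>R v)) v) (at t)"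
proof -
  have l: "((\<lambda>t. x + t *\<^sub>R v) has_derivative (\<lambda>s. s *\<^sub>R v)) (at t)"
    by (auto intro!: derivative_eq_intros)
  have "((\<lambda>t. h (x + t *\<^sub>R v)) has_derivative (\<lambda>s. inner (G (x + t *\<^sub>R v)) (s *\<^sub>R v))) (at t)"
    using has_derivative_compose[OF l assms] by (simp add: o_def)
  moreover have "(\<lambda>s. inner (G (x + t *\<^sub>R v)) (s *\<^sub>R v)) = (*) (inner (G (x + t *\<^sub>R v)) v)"
    by (auto simp: fun_eq_iff)
  ultimately have "((\<lambda>t. h (x + t *\<^sub>R v)) has_derivative (*) (inner (G (x + t *\<^sub>R v)) v)) (at t)" by simp
  then show ?thesis unfolding has_field_derivative_def by simp
qed

lemma tangent_ineq:
  fixes h :: "'a::real_inner \<Rightarrow> real"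
  assumes cv: "convex_on UNIV h" and d: "\<And>v. (h has_derivative (\<lambda>e. inner (G v) e)) (at v)"
  shows "h y \<ge> h x + inner (G x) (y - x)"
proof -
  let ?v = "y - x"
  let ?p = "\<lambda>t. h (x + t *\<^sub>R ?v)"
  have cp: "convex_on UNIV ?p"
  proof (rule convex_onI)
    fix t a b :: real assume t: "0 < t" "t < 1"
    have "x + ((1 - t) * a + t * b) *\<^sub>R ?v = (1 - t) *\<^sub>R (x + a *\<^sub>R ?v) + t *\<^sub>R (x + b *\<^sub>R ?v)"
      by (simp add: algebra_simps)
    then show "?p ((1 - t) *\<^sub>R a + t *\<^sub>R b) \<le> (1 - t) * ?p a + t * ?p b"
      using convex_onD[OF cv, of t "x + a *\<^sub>R ?v" "x + b *\<^sub>R ?v"] t by simp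
  qed auto
  have "?p 1 - ?p 0 \<ge> inner (G (x + 0 *\<^sub>R ?v)) ?v * (1 - 0)"
    by (rule convex_on_imp_above_tangent[OF cp]) (use line_deriv[OF d, of x ?v 0] in auto)
  then show ?thesis by simp
qed

lemma descent_ineq:
  fixes h :: "'a::real_inner \<Rightarrow> real"
  assumes d: "\<And>v. (h has_derivative (\<lambda>e. inner (G v) e)) (at v)"
    and L: "L > 0" and lip: "\<And>v v'. norm (G v - G v') \<le> (1 / L) * norm (v - v')"
  shows "h y \<le> h x + inner (G x) (y - x) + (norm (y - x))\<^sup>2 / (2 * L)"
proof -
  let ?v = "y - x"
  let ?p = "\<lambda>t. h (x + t *\<^sub>R ?v) - t * inner (G x) ?v - t\<^sup>2 * (norm ?v)\<^sup>2 / (2 * L)"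
  have "?p 0 \<ge> ?p 1"
  proof (rule DERIV_nonpos_imp_nonincreasing[where f = ?p])
    fix t :: real assume t: "0 \<le> t" "t \<le> 1"
    have D: "(?p has_real_derivative (inner (G (x + t *\<^sub>R ?v)) ?v - inner (G x) ?v - t * (norm ?v)\<^sup>2 / L)) (at t)"
      using line_deriv[OF d, of x ?v t] L
      by (auto intro!: derivative_eq_intros simp: field_simps power2_eq_square)
    have "inner (G (x + t *\<^sub>R ?v)) ?v - inner (G x) ?v = inner (G (x + t *\<^sub>R ?v) - G x) ?v"
      by (simp add: inner_diff_left)
    also have "\<dots> \<le> norm (G (x + t *\<^sub>R ?v) - G x) * norm ?v"
      by (rule norm_cauchy_schwarz)
    also have "\<dots> \<le> ((1 / L) * norm (t *\<^sub>R ?v)) * norm ?v"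
      using lip[of "x + t *\<^sub>R ?v" x] by (intro mult_right_mono) auto
    also have "\<dots> = t * (norm ?v)\<^sup>2 / L" using t by (simp add: power2_eq_square)
    finally have "inner (G (x + t *\<^sub>R ?v)) ?v - inner (G x) ?v - t * (norm ?v)\<^sup>2 / L \<le> 0" by simp
    with D show "\<exists>y. (?p has_real_derivative y) (at t) \<and> y \<le> 0" by blast
  qed simp
  then show ?thesis by (simp add: inner_commute)
qed




lemma strong_tangent:
  fixes h :: "'a::real_inner \<Rightarrow> real"
  assumes cv: "convex_on UNIV h" and d: "\<And>v. (h has_derivative (\<lambda>e. inner (G v) e)) (at v)"
    and L: "L > 0" and lip: "\<And>v v'. norm (G v - G v') \<le> (1 / L) * norm (v - v')"
  shows "h y \<ge> h x + inner (G x) (y - x) + L / 2 * (norm (G y - G x))\<^sup>2"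
proof -
  define g where "g = G y - G x"
  define w where "w = y - L *\<^sub>R g"
  have 1: "h w \<ge> h x + inner (G x) (w - x)" by (rule tangent_ineq[OF cv d])
  have 2: "h w \<le> h y + inner (G y) (w - y) + (norm (w - y))\<^sup>2 / (2 * L)"
    by (rule descent_ineq[OF d L lip])
  have e1: "inner (G x) (w - x) = inner (G x) (y - x) - L * inner (G x) g"
    unfolding w_def by (simp add: inner_diff_right algebra_simps)
  have e2: "inner (G y) (w - y) = - L * inner (G y) g"
    unfolding w_def by (simp add: inner_diff_right algebra_simps)
  have e3: "(norm (w - y))\<^sup>2 / (2 * L) = L / 2 * (norm g)\<^sup>2"
    unfolding w_def using L by (simp add: power2_eq_square field_simps)
  have e4: "inner (G y) g - inner (G x) g = (norm g)\<^sup>2"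
    unfolding g_def by (simp add: inner_diff_left power2_norm_eq_inner)
  have "h x + inner (G x) (y - x) - L * inner (G x) g \<le> h y - L * inner (G y) g + L / 2 * (norm g)\<^sup>2"
    using 1 2 e1 e2 e3 by linarith
  then have "h x + inner (G x) (y - x) + L * (inner (G y) g - inner (G x) g) - L / 2 * (norm g)\<^sup>2 \<le> h y"
    by (simp add: algebra_simps)
  moreover have "L * (inner (G y) g - inner (G x) g) = L * (norm g)\<^sup>2" using e4 by simp
  moreover have "L / 2 * (norm g)\<^sup>2 = (L * (norm g)\<^sup>2) / 2" by simp
  ultimately have "h x + inner (G x) (y - x) + L / 2 * (norm g)\<^sup>2 \<le> h y" by linarith
  then show ?thesis unfolding g_def .
qed

lemma cocoercive:
  fixes h :: "'a::real_inner \<Rightarrow> real"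
  assumes cv: "convex_on UNIV h" and d: "\<And>v. (h has_derivative (\<lambda>e. inner (G v) e)) (at v)"
    and L: "L > 0" and lip: "\<And>v v'. norm (G v - G v') \<le> (1 / L) * norm (v - v')"
  shows "inner (G x - G y) (x - y) \<ge> L * (norm (G x - G y))\<^sup>2"
proof -
  have 1: "h y \<ge> h x + inner (G x) (y - x) + L / 2 * (norm (G y - G x))\<^sup>2"
    by (rule strong_tangent[OF cv d L lip])
  have 2: "h x \<ge> h y + inner (G y) (x - y) + L / 2 * (norm (G x - G y))\<^sup>2"
    by (rule strong_tangent[OF cv d L lip])
  have n: "norm (G y - G x) = norm (G x - G y)" by (rule norm_minus_commute)
  have "inner (G x - G y) (x - y) = - (inner (G x) (y - x) + inner (G y) (x - y))"
    by (simp add: inner_diff_left inner_diff_right)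
  then show ?thesis using 1 2 n by (simp add: field_simps)
qed

lemma grad_step_nonexp:
  fixes h :: "'a::real_inner \<Rightarrow> real"
  assumes cv: "convex_on UNIV h" and d: "\<And>v. (h has_derivative (\<lambda>e. inner (G v) e)) (at v)"
    and L: "L > 0" and lip: "\<And>v v'. norm (G v - G v') \<le> (1 / L) * norm (v - v')"
    and lam: "0 \<le> lam" "lam \<le> 2 * L"
  shows "norm ((x - lam *\<^sub>R G x) - (y - lam *\<^sub>R G y)) \<le> norm (x - y)"
proof -
  define g where "g = G x - G y"
  have c: "inner g (x - y) \<ge> L * (norm g)\<^sup>2" unfolding g_def by (rule cocoercive[OF cv d L lip])
  have "(x - lam *\<^sub>R G x) - (y - lam *\<^sub>R G y) = (x - y) - lam *\<^sub>R g" by (simp add: g_def algebra_simps)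
  moreover have "\<And>a. (norm (a - lam *\<^sub>R g))\<^sup>2 = (norm a)\<^sup>2 - 2 * lam * inner g a + lam\<^sup>2 * (norm g)\<^sup>2"
    unfolding power2_norm_eq_inner by (simp add: inner_diff_left inner_diff_right inner_commute power2_eq_square algebra_simps)
  ultimately have "(norm ((x - lam *\<^sub>R G x) - (y - lam *\<^sub>R G y)))\<^sup>2
       = (norm (x - y))\<^sup>2 - 2 * lam * inner g (x - y) + lam\<^sup>2 * (norm g)\<^sup>2"
    by metis
  also have "\<dots> \<le> (norm (x - y))\<^sup>2 - lam * (2 * L - lam) * (norm g)\<^sup>2"
  proof -
    have "2 * lam * (L * (norm g)\<^sup>2) \<le> 2 * lam * inner g (x - y)" using c lam by (intro mult_left_mono) auto
    then show ?thesis by (simp add: algebra_simps power2_eq_square)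
  qed
  also have "\<dots> \<le> (norm (x - y))\<^sup>2" using lam by (simp add: mult_nonneg_nonneg)
  finally show ?thesis using power2_le_imp_le by force
qed




lemma convex_lower_linear:
  fixes g :: "'a::real_inner \<Rightarrow> real"
  assumes ct: "continuous_on UNIV g" and cv: "convex_on UNIV g"
  shows "\<exists>k\<ge>0. \<forall>y. g y \<ge> g x - 1 - k * norm (y - x)"
proof -
  have "isCont g x" using ct by (simp add: continuous_on_eq_continuous_at)
  then obtain r where r: "r > 0" "\<And>y. dist y x < r \<Longrightarrow> dist (g y) (g x) < 1"
    unfolding continuous_at_eps_delta by (meson zero_less_one)
  have rb: "\<And>y. norm (y - x) < r \<Longrightarrow> g y > g x - 1"
    using r(2) by (force simp: dist_norm dist_real_def abs_less_iff)
  have "\<forall>y. g y \<ge> g x - 1 - (2 / r) * norm (y - x)"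
  proof
    fix y
    show "g y \<ge> g x - 1 - (2 / r) * norm (y - x)"
    proof (cases "norm (y - x) < r")
      case True
      then show ?thesis using rb[of y] r by (smt (verit) divide_nonneg_nonneg norm_ge_zero mult_nonneg_nonneg)
    next
      case False
      define s where "s = norm (y - x)"
      have s: "s \<ge> r" using False s_def by simp
      define t where "t = r / (2 * s)"
      have t: "0 < t" "t \<le> 1" using s r by (auto simp: t_def field_simps)
      define p where "p = (1 - t) *\<^sub>R x + t *\<^sub>R y"
      have "p - x = t *\<^sub>R (y - x)" by (simp add: p_def algebra_simps)
      then have "norm (p - x) = t * s" using t by (simp add: s_def)
      also have "\<dots> = r / 2" using s r by (simp add: t_def)
      finally have "g p > g x - 1" using rb r by simp
      moreover have "g p \<le> (1 - t) * g x + t * g y"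
        unfolding p_def using convex_onD[OF cv, of t x y] t by simp
      ultimately have "t * g y > t * g x - 1" by (simp add: algebra_simps)
      then have "g y > g x - 1 / t" using t by (simp add: field_simps)
      moreover have "1 / t = (2 / r) * s" using s r by (simp add: t_def field_simps)
      ultimately show ?thesis by (simp add: s_def)
    qed
  qed
  then show ?thesis using r by (intro exI[of _ "2 / r"]) auto
qed

lemma avg_aux: "A < m + a \<Longrightarrow> B < m + b \<Longrightarrow> a \<le> I \<Longrightarrow> b \<le> I \<Longrightarrow> (A + B) / 2 - m < (I::real)"
  by (simp add: field_simps)

lemma prox_exists:
  fixes g :: "'a::{real_inner,complete_space} \<Rightarrow> real"
  assumes ct: "continuous_on UNIV g" and cv: "convex_on UNIV g" and lam: "lam > 0"
  shows "\<exists>p. \<forall>y. g p + (1 / (2 * lam)) * (norm (x - p))\<^sup>2 \<le> g y + (1 / (2 * lam)) * (norm (x - y))\<^sup>2"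
proof -
  define c where "c = 1 / (2 * lam)"
  have c: "c > 0" using lam by (simp add: c_def)
  define F where "F = (\<lambda>y. g y + c * (norm (x - y))\<^sup>2)"
  obtain k where k: "k \<ge> 0" "\<And>y. g y \<ge> g x - 1 - k * norm (y - x)"
    using convex_lower_linear[OF ct cv] by blast
  have lb: "F y \<ge> g x - 1 - k\<^sup>2 / (4 * c)" for y
  proof -
    define s where "s = norm (x - y)"
    have "g y \<ge> g x - 1 - k * s" using k(2)[of y] by (simp add: s_def norm_minus_commute)
    moreover have "c * s\<^sup>2 - k * s + k\<^sup>2 / (4 * c) = (2 * c * s - k)\<^sup>2 / (4 * c)"
      using c by (simp add: field_simps power2_eq_square)
    moreover have "(2 * c * s - k)\<^sup>2 / (4 * c) \<ge> 0" using c by simp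
    ultimately show ?thesis unfolding F_def s_def[symmetric] by linarith
  qed
  define m where "m = Inf (range F)"
  have bdd: "bdd_below (range F)" using lb by (intro bdd_belowI[of _ "g x - 1 - k\<^sup>2 / (4 * c)"]) auto
  have mle: "m \<le> F y" for y unfolding m_def using bdd by (simp add: cInf_lower)
  have "\<forall>n. \<exists>y. F y < m + inverse (real (Suc n))"
  proof
    fix n
    have "m < m + inverse (real (Suc n))" by simp
    then show "\<exists>y. F y < m + inverse (real (Suc n))"
      using cInf_lessD[of "range F"] unfolding m_def by blast
  qed
  then obtain Y where Y: "\<And>n. F (Y n) < m + inverse (real (Suc n))" by metis
  have mid: "c / 4 * (norm (a - b))\<^sup>2 \<le> (F a + F b) / 2 - m" for a b
  proof -
    define q where "q = (1 - 1/2) *\<^sub>R a + (1/2::real) *\<^sub>R b"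
    have gq: "g q \<le> (1 - 1/2) * g a + (1/2) * g b"
      unfolding q_def by (rule convex_onD[OF cv]) auto
    have pq: "(norm (x - q))\<^sup>2 = ((norm (x - a))\<^sup>2 + (norm (x - b))\<^sup>2) / 2 - (norm (a - b))\<^sup>2 / 4"
      unfolding q_def power2_norm_eq_inner
      by (simp add: inner_diff_left inner_diff_right inner_add_left inner_add_right inner_commute algebra_simps; simp add: field_simps)
    have "m \<le> F q" by (rule mle)
    moreover have "c * (norm (x - q))\<^sup>2 = (c * (norm (x - a))\<^sup>2 + c * (norm (x - b))\<^sup>2) / 2 - c / 4 * (norm (a - b))\<^sup>2"
      unfolding pq by (simp add: field_simps)
    moreover have "g q \<le> (g a + g b) / 2" using gq by simp
    ultimately have "m \<le> (g a + g b) / 2 + (c * (norm (x - a))\<^sup>2 + c * (norm (x - b))\<^sup>2) / 2 - c / 4 * (norm (a - b))\<^sup>2"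
      unfolding F_def by linarith
    then show ?thesis unfolding F_def by (simp add: field_simps)
  qed
  have cau: "Cauchy Y"
  proof (rule metric_CauchyI)
    fix e :: real assume e: "e > 0"
    obtain N where N: "inverse (real (Suc N)) < c * e\<^sup>2 / 4"
      using reals_Archimedean[of "c * e\<^sup>2 / 4"] c e by auto
    have "\<forall>n\<ge>N. \<forall>k\<ge>N. dist (Y n) (Y k) < e"
    proof (intro allI impI)
      fix n k assume nk: "n \<ge> N" "k \<ge> N"
      have i1: "inverse (real (Suc n)) \<le> inverse (real (Suc N))" using nk
        by (simp add: le_imp_inverse_le)
      have i2: "inverse (real (Suc k)) \<le> inverse (real (Suc N))" using nk
        by (simp add: le_imp_inverse_le)
      have "c / 4 * (norm (Y n - Y k))\<^sup>2 \<le> (F (Y n) + F (Y k)) / 2 - m" by (rule mid)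
      also have "\<dots> < inverse (real (Suc N))" by (rule avg_aux[OF Y[of n] Y[of k] i1 i2])
      also have "\<dots> < c * e\<^sup>2 / 4" by (rule N)
      also have "\<dots> = c / 4 * e\<^sup>2" by simp
      finally have "c / 4 * (norm (Y n - Y k))\<^sup>2 < c / 4 * e\<^sup>2" .
      then have "(norm (Y n - Y k))\<^sup>2 < e\<^sup>2" using c by (meson mult_less_cancel_left_pos divide_pos_pos zero_less_numeral)
      then show "dist (Y n) (Y k) < e" using e power2_less_imp_less[of "norm (Y n - Y k)" e] by (simp add: dist_norm)
    qed
    then show "\<exists>N. \<forall>n\<ge>N. \<forall>k\<ge>N. dist (Y n) (Y k) < e" by blast
  qed
  then obtain p where p: "Y \<longlonglongrightarrow> p" using Cauchy_convergent_iff convergent_def by blast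
  have Fc: "continuous_on UNIV F" unfolding F_def
    by (intro continuous_intros ct)
  have "(\<lambda>n. F (Y n)) \<longlonglongrightarrow> F p"
    by (intro continuous_on_tendsto_compose[OF Fc p]) auto
  moreover have "(\<lambda>n. F (Y n)) \<longlonglongrightarrow> m"
  proof (rule tendsto_sandwich[of "\<lambda>n. m" _ _ "\<lambda>n. m + inverse (real (Suc n))"])
    show "\<forall>\<^sub>F n in sequentially. m \<le> F (Y n)" using mle by simp
    show "\<forall>\<^sub>F n in sequentially. F (Y n) \<le> m + inverse (real (Suc n))" using Y by (simp add: less_imp_le)
    show "(\<lambda>n. m + inverse (real (Suc n))) \<longlonglongrightarrow> m"
      using tendsto_add[OF tendsto_const LIMSEQ_inverse_real_of_nat, of m] by simp
  qed simp
  ultimately have "F p = m" using LIMSEQ_unique by blast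
  show ?thesis
  proof (intro exI allI)
    fix y show "g p + 1 / (2 * lam) * (norm (x - p))\<^sup>2 \<le> g y + 1 / (2 * lam) * (norm (x - y))\<^sup>2"
      using mle[of y] \<open>F p = m\<close> unfolding F_def c_def by simp
  qed
qed




lemma prox_min:
  fixes g :: "'a::{real_inner,complete_space} \<Rightarrow> real"
  assumes ct: "continuous_on UNIV g" and cv: "convex_on UNIV g" and lam: "lam > 0"
  shows "g (prox lam g x) + (1 / (2 * lam)) * (norm (x - prox lam g x))\<^sup>2 \<le> g y + (1 / (2 * lam)) * (norm (x - y))\<^sup>2"
  using someI_ex[OF prox_exists[OF ct cv lam, of x]] unfolding prox_def by blast

lemma small_param:
  fixes A C :: real
  assumes C: "C \<ge> 0" and h: "\<And>t. 0 < t \<Longrightarrow> t \<le> 1 \<Longrightarrow> A \<le> t * C"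
  shows "A \<le> 0"
proof (rule ccontr)
  assume "\<not> A \<le> 0"
  then have A: "A > 0" by simp
  define t where "t = min 1 (A / (2 * (C + 1)))"
  have t: "0 < t" "t \<le> 1" using A C by (auto simp: t_def)
  have "t * C \<le> t * (C + 1)" using t by simp
  also have "\<dots> \<le> (A / (2 * (C + 1))) * (C + 1)" using C t by (intro mult_right_mono) (auto simp: t_def)
  also have "\<dots> = A / 2" using C by (simp add: field_simps)
  finally show False using h[OF t] A by linarith
qed

lemma prox_var:
  fixes g :: "'a::{real_inner,complete_space} \<Rightarrow> real"
  assumes ct: "continuous_on UNIV g" and cv: "convex_on UNIV g" and lam: "lam > 0"
    and p: "p = prox lam g x"
  shows "inner (x - p) (v - p) \<le> lam * (g v - g p)"
proof -
  define c where "c = 1 / (2 * lam)"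
  have c: "c > 0" using lam by (simp add: c_def)
  have key: "g p - g v + 2 * c * inner (x - p) (v - p) \<le> t * (c * (norm (v - p))\<^sup>2)"
    if t: "0 < t" "t \<le> 1" for t
  proof -
    define q where "q = (1 - t) *\<^sub>R p + t *\<^sub>R v"
    have m: "g p + c * (norm (x - p))\<^sup>2 \<le> g q + c * (norm (x - q))\<^sup>2"
      using prox_min[OF ct cv lam, of x q] unfolding p[symmetric] c_def .
    have gq: "g q \<le> (1 - t) * g p + t * g v" unfolding q_def using t by (intro convex_onD[OF cv]) auto
    have gen: "\<And>a w. (norm (a - t *\<^sub>R w))\<^sup>2 = (norm a)\<^sup>2 - 2 * t * inner a w + t\<^sup>2 * (norm w)\<^sup>2"
      unfolding power2_norm_eq_inner
      by (simp add: inner_diff_left inner_diff_right inner_commute power2_eq_square algebra_simps)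
    have "x - q = (x - p) - t *\<^sub>R (v - p)" by (simp add: q_def algebra_simps)
    then have nq: "(norm (x - q))\<^sup>2 = (norm (x - p))\<^sup>2 - 2 * t * inner (x - p) (v - p) + t\<^sup>2 * (norm (v - p))\<^sup>2"
      using gen by metis
    define I where "I = inner (x - p) (v - p)"
    define N where "N = (norm (v - p))\<^sup>2"
    define P where "P = (norm (x - p))\<^sup>2"
    define Q where "Q = (norm (x - q))\<^sup>2"
    have cq: "c * Q = c * P - 2 * (c * t * I) + c * t\<^sup>2 * N"
      unfolding Q_def nq P_def[symmetric] I_def[symmetric] N_def[symmetric] by (simp add: algebra_simps)
    have gq': "g q \<le> g p - t * g p + t * g v" using gq by (simp add: algebra_simps)
    have "t * g p - t * g v + 2 * (c * t * I) \<le> c * t\<^sup>2 * N"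
      using m[folded P_def Q_def] gq' cq by linarith
    then have "t * (g p - g v + 2 * c * inner (x - p) (v - p)) \<le> t * (t * (c * (norm (v - p))\<^sup>2))"
      unfolding I_def[symmetric] N_def[symmetric] by (simp add: algebra_simps power2_eq_square)
    then show ?thesis using t by simp
  qed
  have "g p - g v + 2 * c * inner (x - p) (v - p) \<le> 0"
    by (rule small_param[OF _ key]) (use c in auto)
  then have "2 * c * inner (x - p) (v - p) \<le> g v - g p" by linarith
  then have "lam * (2 * c * inner (x - p) (v - p)) \<le> lam * (g v - g p)" using lam by (intro mult_left_mono) auto
  then show ?thesis using lam by (simp add: c_def)
qed

lemma prox_diff:
  fixes g :: "'a::{real_inner,complete_space} \<Rightarrow> real"
  assumes ct: "continuous_on UNIV g" and cv: "convex_on UNIV g" and lam: "lam > 0" and mu: "mu > 0"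
  shows "norm (prox lam g a - prox mu g b) \<le> norm (a - b) + \<bar>mu - lam\<bar> / lam * norm (a - prox lam g a)"
proof -
  define p where "p = prox lam g a"
  define q where "q = prox mu g b"
  have 1: "inner (a - p) (q - p) \<le> lam * (g q - g p)" by (rule prox_var[OF ct cv lam p_def])
  have 2: "inner (b - q) (p - q) \<le> mu * (g p - g q)" by (rule prox_var[OF ct cv mu q_def])
  have "mu * inner (a - p) (q - p) + lam * inner (b - q) (p - q) \<le> mu * (lam * (g q - g p)) + lam * (mu * (g p - g q))"
  proof -
    have "mu * inner (a - p) (q - p) \<le> mu * (lam * (g q - g p))" using 1 mu by (intro mult_left_mono) auto
    moreover have "lam * inner (b - q) (p - q) \<le> lam * (mu * (g p - g q))" using 2 lam by (intro mult_left_mono) auto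
    ultimately show ?thesis by linarith
  qed
  then have 3: "mu * inner (a - p) (q - p) + lam * inner (b - q) (p - q) \<le> 0" by (simp add: algebra_simps)
  define r where "r = lam *\<^sub>R (a - b) + (mu - lam) *\<^sub>R (a - p)"
  have id: "mu * inner (a - p) (q - p) + lam * inner (b - q) (p - q) = lam * (norm (p - q))\<^sup>2 - inner r (p - q)"
    unfolding r_def power2_norm_eq_inner
    by (simp add: inner_diff_left inner_diff_right inner_add_left inner_commute algebra_simps)
  have "lam * (norm (p - q))\<^sup>2 \<le> inner r (p - q)" using 3 id by linarith
  also have "\<dots> \<le> norm r * norm (p - q)" by (rule norm_cauchy_schwarz)
  also have "norm r \<le> lam * norm (a - b) + \<bar>mu - lam\<bar> * norm (a - p)"
    unfolding r_def using lam by (metis (no_types, opaque_lifting) abs_of_pos norm_scaleR norm_triangle_ineq)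
  then have "norm r * norm (p - q) \<le> (lam * norm (a - b) + \<bar>mu - lam\<bar> * norm (a - p)) * norm (p - q)"
    by (intro mult_right_mono) auto
  finally have "lam * (norm (p - q))\<^sup>2 \<le> (lam * norm (a - b) + \<bar>mu - lam\<bar> * norm (a - p)) * norm (p - q)" .
  then have "lam * norm (p - q) \<le> lam * norm (a - b) + \<bar>mu - lam\<bar> * norm (a - p)"
    using lam by (cases "norm (p - q) = 0") (auto simp: power2_eq_square mult.assoc[symmetric] intro: mult_right_le_imp_le)
  then have "norm (p - q) \<le> (lam * norm (a - b) + \<bar>mu - lam\<bar> * norm (a - p)) / lam"
    using lam by (simp add: field_simps)
  also have "\<dots> = norm (a - b) + \<bar>mu - lam\<bar> / lam * norm (a - p)" using lam by (simp add: field_simps)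
  finally show ?thesis unfolding p_def q_def .
qed




lemma xu_lemma:
  fixes a g d :: "nat \<Rightarrow> real"
  assumes a0: "\<And>n. a n \<ge> 0" and g: "\<And>n. 0 \<le> g n \<and> g n \<le> 1"
    and rec: "\<And>n. a (Suc n) \<le> (1 - g n) * a n + g n * d n"
    and div: "filterlim (\<lambda>n. \<Sum>k\<le>n. g k) at_top sequentially"
    and d0: "d \<longlonglongrightarrow> 0"
  shows "a \<longlonglongrightarrow> 0"
proof (rule LIMSEQ_I)
  fix e :: real assume e: "e > 0"
  define \<epsilon> where "\<epsilon> = e / 2"
  have eps: "\<epsilon> > 0" using e by (simp add: \<epsilon>_def)
  obtain N where N: "\<And>n. n \<ge> N \<Longrightarrow> d n \<le> \<epsilon>"
  proof -
    obtain N where "\<forall>n\<ge>N. \<bar>d n - 0\<bar> < \<epsilon>" using d0 eps unfolding LIMSEQ_def dist_real_def by blast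
    then show ?thesis using that by (metis abs_less_iff diff_zero less_imp_le)
  qed
  define b where "b n = max (a n - \<epsilon>) 0" for n
  have b0: "b n \<ge> 0" for n by (simp add: b_def)
  have bstep: "b (Suc n) \<le> (1 - g n) * b n" if n: "n \<ge> N" for n
  proof -
    have "a (Suc n) - \<epsilon> \<le> (1 - g n) * a n + g n * \<epsilon> - \<epsilon>"
      using rec[of n] N[OF n] g[of n] mult_left_mono[of "d n" \<epsilon> "g n"] by linarith
    also have "\<dots> = (1 - g n) * (a n - \<epsilon>)" by (simp add: algebra_simps)
    also have "\<dots> \<le> (1 - g n) * b n" using g[of n] by (intro mult_left_mono) (auto simp: b_def)
    finally have 1: "a (Suc n) - \<epsilon> \<le> (1 - g n) * b n" .
    have 2: "0 \<le> (1 - g n) * b n" using g[of n] b0[of n] by simp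
    show ?thesis using 1 2 by (simp add: b_def)
  qed
  define S where "S n = (\<Sum>i<n. g i)" for n
  have bexp: "b n \<le> b N * exp (S N - S n)" if "n \<ge> N" for n
    using that
  proof (induction n rule: dec_induct)
    case base then show ?case by simp
  next
    case (step n)
    have "b (Suc n) \<le> (1 - g n) * b n" using bstep step by simp
    also have "\<dots> \<le> exp (- g n) * b n"
      using b0[of n] exp_ge_add_one_self[of "- g n"] by (intro mult_right_mono) auto
    also have "\<dots> \<le> exp (- g n) * (b N * exp (S N - S n))" using step by (intro mult_left_mono) auto
    also have "\<dots> = b N * exp (S N - S (Suc n))"
    proof -
      have "exp (- g n) * exp (S N - S n) = exp (S N - S (Suc n))"
        unfolding mult_exp_exp by (simp add: S_def)
      then show ?thesis by simp
    qed
    finally show ?case .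
  qed
  define X where "X = S N + b N / \<epsilon>"
  obtain n0 where n0: "\<And>n. n \<ge> n0 \<Longrightarrow> (\<Sum>k\<le>n. g k) \<ge> X"
    using div unfolding filterlim_at_top eventually_sequentially by blast
  show "\<exists>M. \<forall>n\<ge>M. norm (a n - 0) < e"
  proof (intro exI allI impI)
    fix n assume n: "n \<ge> Suc (max N n0)"
    then obtain m where m: "n = Suc m" "m \<ge> max N n0" by (cases n) auto
    have Sn: "S n \<ge> X" using n0[of m] m by (simp add: S_def lessThan_Suc_atMost)
    have bn: "b n \<le> b N * exp (S N - S n)" using bexp m by simp
    have "b N * exp (S N - S n) < \<epsilon>"
    proof -
      have "S n - S N \<ge> b N / \<epsilon>" using Sn by (simp add: X_def)
      then have "exp (S n - S N) > b N / \<epsilon>" using exp_ge_add_one_self[of "S n - S N"] by linarith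
      then have "b N < \<epsilon> * exp (S n - S N)" using eps by (simp add: field_simps)
      then show ?thesis by (simp add: exp_diff field_simps)
    qed
    then have "a n - \<epsilon> < \<epsilon>" using bn by (simp add: b_def)
    then show "norm (a n - 0) < e" using a0[of n] by (simp add: \<epsilon>_def)
  qed
qed




locale lem6 =
  fixes M :: nat
    and f h :: "nat \<Rightarrow> 'a::{real_inner, complete_space} \<Rightarrow> real"
    and gradh :: "nat \<Rightarrow> 'a \<Rightarrow> 'a"
    and L :: "nat \<Rightarrow> real"
    and T :: "nat \<Rightarrow> 'a \<Rightarrow> 'a"
    and S :: "'a set"
    and \<psi> :: "'a \<Rightarrow> real"
    and \<theta> lam \<beta> \<alpha> :: "nat \<Rightarrow> real"
    and \<sigma> :: real
    and u :: "nat \<Rightarrow> 'a"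
    and x z :: "nat \<Rightarrow> 'a"
    and d y w :: "nat \<Rightarrow> nat \<Rightarrow> 'a"
  assumes M: "M \<ge> 1"
    and A1_cont: "\<And>i. i \<in> {1..M} \<Longrightarrow> continuous_on UNIV (f i)"
    and A1_conv: "\<And>i. i \<in> {1..M} \<Longrightarrow> convex_on UNIV (f i)"
    and A2_conv: "\<And>i. i \<in> {1..M} \<Longrightarrow> convex_on UNIV (h i)"
    and A2_grad: "\<And>i v. i \<in> {1..M} \<Longrightarrow>
                    (h i has_derivative (\<lambda>e. inner (gradh i v) e)) (at v)"
    and A2_L: "\<And>i. i \<in> {1..M} \<Longrightarrow> L i > 0"
    and A2_lip: "\<And>i v v'. i \<in> {1..M} \<Longrightarrow>
                    norm (gradh i v - gradh i v') \<le> (1 / L i) * norm (v - v')"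
    and A3: "\<And>i. i \<in> {1..M} \<Longrightarrow> firmly_nonexpansive (T i)"
    and S_def: "S = {v. \<forall>i\<in>{1..M}. T i v = v}"
    and S_ne: "S \<noteq> {}"
    and psi_def: "\<psi> = (\<lambda>v. \<Sum>i\<in>{1..M}. f i v + h i v)"
    and Omega_ne: "{xh \<in> S. \<forall>v\<in>S. \<psi> xh \<le> \<psi> v} \<noteq> {}"
    and dec: "decseq \<theta>" "decseq lam" "decseq \<beta>" "decseq \<alpha>"
    and lim0: "\<theta> \<longlonglongrightarrow> 0" "lam \<longlonglongrightarrow> 0" "\<beta> \<longlonglongrightarrow> 0" "\<alpha> \<longlonglongrightarrow> 0"
    and theta_rng: "\<And>n. 0 \<le> \<theta> n \<and> \<theta> n < 1"
    and lam_rng: "\<And>n. 0 < lam n \<and> lam n \<le> 2 * Min (L ` {1..M})"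
    and beta_rng: "\<And>n. 0 < \<beta> n \<and> \<beta> n \<le> 1"
    and alpha_rng: "\<And>n. 0 < \<alpha> n \<and> \<alpha> n \<le> 1"
    and C1: "filterlim (\<lambda>n. \<Sum>k\<le>n. \<alpha> k) at_top sequentially"
    and C2: "(\<lambda>n. (1 / \<alpha> (Suc n)) * \<bar>1 / lam (Suc n) - 1 / lam n\<bar>) \<longlonglongrightarrow> 0"
    and C3: "(\<lambda>n. (1 / lam (Suc n)) * \<bar>1 - \<alpha> n / \<alpha> (Suc n)\<bar>) \<longlonglongrightarrow> 0"
    and C4: "(\<lambda>n. \<alpha> n / lam n) \<longlonglongrightarrow> 0"
    and C5: "(\<lambda>n. \<theta> n / (\<alpha> (Suc n) * lam (Suc n))) \<longlonglongrightarrow> 0"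
    and C6: "\<sigma> \<ge> 1" "\<And>n. lam n / lam (Suc n) \<le> \<sigma>"
    and C7: "(\<lambda>n. \<beta> n / \<alpha> (Suc n)) \<longlonglongrightarrow> 0"
    \<comment> \<open>The algorithm (z 0, x 0, x 1, u i arbitrary); w i n stands for w^{(i+1)}_n\<close>
    and d1: "\<And>i. i \<in> {1..M} \<Longrightarrow> d i 1 = - gradh i (z 0)"
    and z_def: "\<And>n. n \<ge> 1 \<Longrightarrow> z n = x n + \<theta> n *\<^sub>R (x n - x (n - 1))"
    and d_def: "\<And>i n. i \<in> {1..M} \<Longrightarrow> n \<ge> 1 \<Longrightarrow>
                  d i (Suc n) = - gradh i (z n) + \<beta> n *\<^sub>R d i n"
    and y_def: "\<And>i n. i \<in> {1..M} \<Longrightarrow> n \<ge> 1 \<Longrightarrow>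
                  y i n = prox (lam n) (f i) (z n + lam n *\<^sub>R d i (Suc n))"
    and w_def: "\<And>i n. i \<in> {1..M} \<Longrightarrow> n \<ge> 1 \<Longrightarrow>
                  w i n = \<alpha> n *\<^sub>R u i + (1 - \<alpha> n) *\<^sub>R T i (y i n)"
    and x_def: "\<And>n. n \<ge> 1 \<Longrightarrow>
                  x (Suc n) = (1 / real M) *\<^sub>R (\<Sum>i\<in>{1..M}. w i n)"
    and y_bdd: "\<And>i. i \<in> {1..M} \<Longrightarrow> bounded (y i ` {1..})"
begin

abbreviation "I \<equiv> {1..M}"

lemma finI: "finite I" by simp
lemma cardI: "card I = M" by simp

lemma lam_pos: "lam n > 0" using lam_rng by simp
lemma lam_le0: "lam n \<le> lam 0" using dec(2) by (simp add: decseq_def)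
lemma lam_mono: "m \<le> n \<Longrightarrow> lam n \<le> lam m" using dec(2) by (simp add: decseq_def)
lemma alpha_pos: "\<alpha> n > 0" using alpha_rng by simp
lemma alpha_le1: "\<alpha> n \<le> 1" using alpha_rng by simp

lemma lam_le_L: "i \<in> I \<Longrightarrow> lam n \<le> 2 * L i"
proof -
  assume i: "i \<in> I"
  have "Min (L ` I) \<le> L i" using i by (intro Min_le) auto
  then show ?thesis using lam_rng[of n] by linarith
qed

definition Lm where "Lm = Min (L ` I)"
lemma Lm_pos: "Lm > 0" unfolding Lm_def using M A2_L by (subst Min_gr_iff) auto
lemma Lm_le: "i \<in> I \<Longrightarrow> Lm \<le> L i" unfolding Lm_def by (intro Min_le) auto

lemma T_nonexp: "i \<in> I \<Longrightarrow> norm (T i a - T i b) \<le> norm (a - b)"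
proof -
  assume i: "i \<in> I"
  have "(norm (T i a - T i b))\<^sup>2 \<le> inner (T i a - T i b) (a - b)"
    using A3[OF i] unfolding firmly_nonexpansive_def by blast
  also have "\<dots> \<le> norm (T i a - T i b) * norm (a - b)" by (rule norm_cauchy_schwarz)
  finally have "norm (T i a - T i b) * norm (T i a - T i b) \<le> norm (T i a - T i b) * norm (a - b)"
    by (simp add: power2_eq_square)
  then show ?thesis by (cases "norm (T i a - T i b) = 0") (auto intro: mult_left_le_imp_le)
qed

end


context lem6 begin

definition xs where "xs = (SOME v. v \<in> S)"
lemma xs_S: "xs \<in> S" unfolding xs_def using S_ne by (simp add: some_in_eq)
lemma T_xs: "i \<in> I \<Longrightarrow> T i xs = xs" using xs_S S_def by auto

lemma y_bound: "\<exists>B. \<forall>i\<in>I. \<forall>n\<ge>1. norm (y i n) \<le> B"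
proof -
  have "bounded (\<Union>i\<in>I. y i ` {1..})" using y_bdd by (intro bounded_UN) auto
  then obtain B where "\<forall>v\<in>(\<Union>i\<in>I. y i ` {1..}). norm v \<le> B" unfolding bounded_iff by blast
  then show ?thesis by auto
qed

definition By where "By = (SOME B. \<forall>i\<in>I. \<forall>n\<ge>1. norm (y i n) \<le> B)"
lemma By: "i \<in> I \<Longrightarrow> n \<ge> 1 \<Longrightarrow> norm (y i n) \<le> By"
  using someI_ex[OF y_bound] unfolding By_def by blast

definition BT where "BT = By + 2 * norm xs"
lemma BT: "i \<in> I \<Longrightarrow> n \<ge> 1 \<Longrightarrow> norm (T i (y i n)) \<le> BT"
proof -
  assume i: "i \<in> I" and n: "n \<ge> 1"
  have "norm (T i (y i n) - xs) \<le> norm (y i n - xs)" using T_nonexp[OF i, of "y i n" xs] T_xs[OF i] by simp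
  then have "norm (T i (y i n)) \<le> norm (y i n - xs) + norm xs" by (smt (verit) norm_triangle_ineq2)
  also have "\<dots> \<le> norm (y i n) + 2 * norm xs" using norm_triangle_ineq4[of "y i n" xs] by simp
  finally show ?thesis using By[OF i n] unfolding BT_def by simp
qed

definition Bu where "Bu = (\<Sum>i\<in>I. norm (u i))"
lemma Bu: "i \<in> I \<Longrightarrow> norm (u i) \<le> Bu"
  unfolding Bu_def by (rule member_le_sum) auto

lemma BT_nn: "BT \<ge> 0" using BT[of 1 1] M by (smt (verit) atLeastAtMost_iff norm_ge_zero order_refl)
lemma Bu_nn: "Bu \<ge> 0" unfolding Bu_def by (simp add: sum_nonneg)

definition Bw where "Bw = Bu + BT"
lemma Bw: "i \<in> I \<Longrightarrow> n \<ge> 1 \<Longrightarrow> norm (w i n) \<le> Bw"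
proof -
  assume i: "i \<in> I" and n: "n \<ge> 1"
  have "norm (w i n) \<le> norm (\<alpha> n *\<^sub>R u i) + norm ((1 - \<alpha> n) *\<^sub>R T i (y i n))"
    unfolding w_def[OF i n] by (rule norm_triangle_ineq)
  also have "\<dots> = \<alpha> n * norm (u i) + (1 - \<alpha> n) * norm (T i (y i n))"
    using alpha_rng[of n] by simp
  also have "\<dots> \<le> 1 * Bu + 1 * BT"
    using alpha_rng[of n] Bu[OF i] BT[OF i n] norm_ge_zero[of "u i"] norm_ge_zero[of "T i (y i n)"]
    by (intro add_mono mult_mono) auto
  finally show ?thesis unfolding Bw_def by simp
qed

lemma avg_bound:
  assumes "\<And>i. i \<in> I \<Longrightarrow> norm (v i) \<le> B"
  shows "norm ((1 / real M) *\<^sub>R (\<Sum>i\<in>I. v i)) \<le> B"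
proof -
  have "norm (\<Sum>i\<in>I. v i) \<le> (\<Sum>i\<in>I. norm (v i))" by (rule norm_sum)
  also have "\<dots> \<le> (\<Sum>i\<in>I. B)" using assms by (intro sum_mono) auto
  also have "\<dots> = real M * B" by simp
  finally have "norm (\<Sum>i\<in>I. v i) \<le> real M * B" .
  then show ?thesis using M by (simp add: field_simps)
qed

definition Bx where "Bx = max (max (norm (x 0)) (norm (x 1))) Bw"
lemma Bx: "norm (x n) \<le> Bx"
proof (cases "n \<le> 1")
  case True
  then have "n = 0 \<or> n = 1" by auto
  then show ?thesis unfolding Bx_def by auto
next
  case False
  then obtain m where m: "n = Suc m" "m \<ge> 1" by (cases n) auto
  have "norm (x n) \<le> Bw" unfolding m(1) x_def[OF m(2)] by (rule avg_bound) (rule Bw[OF _ m(2)])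
  then show ?thesis unfolding Bx_def by simp
qed
lemma Bx_nn: "Bx \<ge> 0" using Bx[of 0] norm_ge_zero[of "x 0"] by linarith

lemma x_diff: "norm (x a - x b) \<le> 2 * Bx"
  using norm_triangle_ineq4[of "x a" "x b"] Bx[of a] Bx[of b] by simp

lemma z_bound: "n \<ge> 1 \<Longrightarrow> norm (z n) \<le> 3 * Bx"
proof -
  assume n: "n \<ge> 1"
  have "norm (z n) \<le> norm (x n) + norm (\<theta> n *\<^sub>R (x n - x (n - 1)))"
    unfolding z_def[OF n] by (rule norm_triangle_ineq)
  also have "\<dots> = norm (x n) + \<theta> n * norm (x n - x (n - 1))" using theta_rng[of n] by simp
  also have "\<dots> \<le> Bx + 1 * (2 * Bx)" using theta_rng[of n] Bx[of n] x_diff[of n "n - 1"]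
    by (intro add_mono mult_mono) auto
  finally show ?thesis by simp
qed

definition BG0 where "BG0 = (\<Sum>i\<in>I. norm (gradh i 0))"
definition Bg where "Bg = BG0 + 3 * Bx / Lm"
lemma Bg: "i \<in> I \<Longrightarrow> n \<ge> 1 \<Longrightarrow> norm (gradh i (z n)) \<le> Bg"
proof -
  assume i: "i \<in> I" and n: "n \<ge> 1"
  have g0: "norm (gradh i 0) \<le> BG0" unfolding BG0_def by (rule member_le_sum) (use i in auto)
  have "norm (gradh i (z n)) \<le> norm (gradh i (z n) - gradh i 0) + norm (gradh i 0)"
    using norm_triangle_ineq[of "gradh i (z n) - gradh i 0" "gradh i 0"] by simp
  also have "\<dots> \<le> (1 / L i) * norm (z n - 0) + BG0" using A2_lip[OF i, of "z n" 0] g0 by linarith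
  also have "(1 / L i) * norm (z n - 0) \<le> (1 / Lm) * (3 * Bx)"
    using Lm_pos Lm_le[OF i] z_bound[OF n] A2_L[OF i]
    by (intro mult_mono) (auto simp: divide_simps)
  finally show ?thesis unfolding Bg_def by simp
qed
lemma Bg_nn: "Bg \<ge> 0" using Bg[of 1 1] M by (smt (verit) atLeastAtMost_iff norm_ge_zero order_refl)

end


context lem6 begin

lemma beta_half: "\<exists>N0\<ge>1. \<forall>n\<ge>N0. \<beta> n \<le> 1/2"
proof -
  obtain N where "\<forall>n\<ge>N. \<bar>\<beta> n - 0\<bar> < 1/2" using lim0(3) unfolding LIMSEQ_def dist_real_def
    by (metis divide_pos_pos zero_less_numeral zero_less_one)
  then have "\<forall>n\<ge>Suc N. \<beta> n \<le> 1/2" by (metis abs_less_iff diff_zero less_imp_le le_SucI le_Suc_eq Suc_leD)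
  then show ?thesis by (intro exI[of _ "Suc N"]) auto
qed

definition N0 where "N0 = (SOME N0. N0 \<ge> 1 \<and> (\<forall>n\<ge>N0. \<beta> n \<le> 1/2))"
lemma N0: "N0 \<ge> 1" "n \<ge> N0 \<Longrightarrow> \<beta> n \<le> 1/2"
  using someI_ex[OF beta_half] unfolding N0_def by auto

definition D1 where "D1 = (\<Sum>i\<in>I. norm (d i 1))"
definition Bd where "Bd = D1 + real N0 * Bg + 2 * Bg"

lemma d_step: "i \<in> I \<Longrightarrow> n \<ge> 1 \<Longrightarrow> norm (d i (Suc n)) \<le> Bg + \<beta> n * norm (d i n)"
proof -
  assume i: "i \<in> I" and n: "n \<ge> 1"
  have "norm (d i (Suc n)) \<le> norm (- gradh i (z n)) + norm (\<beta> n *\<^sub>R d i n)"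
    unfolding d_def[OF i n] by (rule norm_triangle_ineq)
  then show ?thesis using Bg[OF i n] beta_rng[of n] by simp
qed

lemma d_claim1: "i \<in> I \<Longrightarrow> n \<ge> 1 \<Longrightarrow> norm (d i n) \<le> D1 + real (n - 1) * Bg"
proof -
  assume i: "i \<in> I"
  show "n \<ge> 1 \<Longrightarrow> norm (d i n) \<le> D1 + real (n - 1) * Bg"
  proof (induction n rule: dec_induct)
    case base
    have "norm (d i 1) \<le> D1" unfolding D1_def using i by (intro member_le_sum) auto
    then show ?case by simp
  next
    case (step n)
    have "norm (d i (Suc n)) \<le> Bg + \<beta> n * norm (d i n)" by (rule d_step[OF i step(1)])
    also have "\<dots> \<le> Bg + 1 * norm (d i n)" using beta_rng[of n] by (intro add_left_mono mult_right_mono) auto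
    also have "\<dots> \<le> Bg + (D1 + real (n - 1) * Bg)" using step by simp
    also have "\<dots> = D1 + real (Suc n - 1) * Bg" using step(1) by (simp add: algebra_simps of_nat_diff)
    finally show ?case .
  qed
qed

lemma D1_nn: "D1 \<ge> 0" unfolding D1_def by (simp add: sum_nonneg)

lemma Bd: "i \<in> I \<Longrightarrow> n \<ge> 1 \<Longrightarrow> norm (d i n) \<le> Bd"
proof -
  assume i: "i \<in> I" and n: "n \<ge> 1"
  have c2: "norm (d i m) \<le> Bd" if m: "m \<ge> N0" for m
    using m
  proof (induction m rule: dec_induct)
    case base
    have "norm (d i N0) \<le> D1 + real (N0 - 1) * Bg" using d_claim1[OF i N0(1)] .
    also have "\<dots> \<le> Bd" unfolding Bd_def using Bg_nn N0(1) by (simp add: of_nat_diff algebra_simps)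
    finally show ?case .
  next
    case (step m)
    have m1: "m \<ge> 1" using step(1) N0(1) by simp
    have "norm (d i (Suc m)) \<le> Bg + \<beta> m * norm (d i m)" by (rule d_step[OF i m1])
    also have "\<dots> \<le> Bg + (1/2) * Bd" using N0(2)[OF step(1)] step(3) beta_rng[of m]
      by (intro add_left_mono mult_mono) auto
    also have "\<dots> \<le> Bd" unfolding Bd_def using Bg_nn D1_nn by simp
    finally show ?case .
  qed
  show ?thesis
  proof (cases "n \<le> N0")
    case True
    have "norm (d i n) \<le> D1 + real (n - 1) * Bg" using d_claim1[OF i n] .
    also have "\<dots> \<le> Bd" unfolding Bd_def using Bg_nn True n
    proof -
      have "real (n - 1) * Bg \<le> real N0 * Bg" using True Bg_nn by (intro mult_right_mono) auto
      then show "D1 + real (n - 1) * Bg \<le> D1 + real N0 * Bg + 2 * Bg" using Bg_nn by linarith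
    qed
    finally show ?thesis .
  qed (use c2 in auto)
qed

lemma Bd_nn: "Bd \<ge> 0" unfolding Bd_def using D1_nn Bg_nn by simp

definition K1 where "K1 = Bu + BT"
lemma K1: "i \<in> I \<Longrightarrow> n \<ge> 1 \<Longrightarrow> norm (u i - T i (y i n)) \<le> K1"
  unfolding K1_def using Bu BT norm_triangle_ineq4[of "u i" "T i (y i n)"] by (smt (verit))

definition Ba where "Ba = 3 * Bx + lam 0 * Bd + By"
lemma Ba: "i \<in> I \<Longrightarrow> n \<ge> 1 \<Longrightarrow> norm (z n + lam n *\<^sub>R d i (Suc n) - y i n) \<le> Ba"
proof -
  assume i: "i \<in> I" and n: "n \<ge> 1"
  have "norm (z n + lam n *\<^sub>R d i (Suc n) - y i n) \<le> norm (z n) + norm (lam n *\<^sub>R d i (Suc n)) + norm (y i n)"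
    by (smt (verit) norm_triangle_ineq norm_triangle_ineq4)
  also have "norm (lam n *\<^sub>R d i (Suc n)) = lam n * norm (d i (Suc n))" using lam_pos[of n] by simp
  also have "\<dots> \<le> lam 0 * Bd" using lam_le0[of n] lam_pos[of n] Bd[OF i, of "Suc n"] Bd_nn
    by (intro mult_mono) auto
  finally show ?thesis unfolding Ba_def using z_bound[OF n] By[OF i n] by linarith
qed

end


context lem6 begin

definition Dl where "Dl n = norm (x (Suc n) - x n)"

lemma theta_dec: "\<theta> (Suc n) \<le> \<theta> n" using dec(1) by (simp add: decseq_Suc_iff)
lemma lam_dec: "lam (Suc n) \<le> lam n" using dec(2) by (simp add: decseq_Suc_iff)
lemma beta_dec: "\<beta> (Suc n) \<le> \<beta> n" using dec(3) by (simp add: decseq_Suc_iff)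

lemma z_diff: "n \<ge> 1 \<Longrightarrow> norm (z (Suc n) - z n) \<le> Dl n + 4 * Bx * \<theta> n"
proof -
  assume n: "n \<ge> 1"
  have "z (Suc n) - z n = (x (Suc n) - x n) + \<theta> (Suc n) *\<^sub>R (x (Suc n) - x n) - \<theta> n *\<^sub>R (x n - x (n - 1))"
    using z_def[OF n] z_def[of "Suc n"] by simp
  then have "norm (z (Suc n) - z n) \<le> norm (x (Suc n) - x n) + norm (\<theta> (Suc n) *\<^sub>R (x (Suc n) - x n)) + norm (\<theta> n *\<^sub>R (x n - x (n - 1)))"
    by (smt (verit) norm_triangle_ineq norm_triangle_ineq4)
  also have "\<dots> = Dl n + \<theta> (Suc n) * norm (x (Suc n) - x n) + \<theta> n * norm (x n - x (n - 1))"
    using theta_rng[of n] theta_rng[of "Suc n"] by (simp add: Dl_def)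
  also have "\<dots> \<le> Dl n + \<theta> n * (2 * Bx) + \<theta> n * (2 * Bx)"
    using theta_rng[of n] theta_rng[of "Suc n"] theta_dec[of n] x_diff[of "Suc n" n] x_diff[of n "n - 1"] Bx_nn
    by (intro add_mono mult_mono order_refl) auto
  also have "\<dots> = Dl n + 4 * Bx * \<theta> n" by (simp add: algebra_simps)
  finally show ?thesis .
qed

definition aa where "aa i n = z n + lam n *\<^sub>R d i (Suc n)"

lemma a_diff: "i \<in> I \<Longrightarrow> n \<ge> 1 \<Longrightarrow>
   norm (aa i (Suc n) - aa i n) \<le> norm (z (Suc n) - z n) + (lam n - lam (Suc n)) * Bg + 2 * (lam n * \<beta> n) * Bd"
proof -
  assume i: "i \<in> I" and n: "n \<ge> 1"
  let ?G = "gradh i"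
  have e: "aa i (Suc n) - aa i n = ((z (Suc n) - lam (Suc n) *\<^sub>R ?G (z (Suc n))) - (z n - lam (Suc n) *\<^sub>R ?G (z n)))
      + (lam n - lam (Suc n)) *\<^sub>R ?G (z n) + (lam (Suc n) * \<beta> (Suc n)) *\<^sub>R d i (Suc n) - (lam n * \<beta> n) *\<^sub>R d i n"
  proof -
    have d2: "d i (Suc (Suc n)) = - ?G (z (Suc n)) + \<beta> (Suc n) *\<^sub>R d i (Suc n)"
      using d_def[OF i, of "Suc n"] n by simp
    have d1: "d i (Suc n) = - ?G (z n) + \<beta> n *\<^sub>R d i n" using d_def[OF i n] .
    have a1: "aa i (Suc n) = z (Suc n) + lam (Suc n) *\<^sub>R (- ?G (z (Suc n)) + \<beta> (Suc n) *\<^sub>R d i (Suc n))"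
      unfolding aa_def d2 ..
    have a0: "aa i n = z n + lam n *\<^sub>R (- ?G (z n) + \<beta> n *\<^sub>R d i n)"
      unfolding aa_def d1 ..
    show ?thesis unfolding a1 a0 by (simp add: algebra_simps)
  qed
  have 1: "norm ((z (Suc n) - lam (Suc n) *\<^sub>R ?G (z (Suc n))) - (z n - lam (Suc n) *\<^sub>R ?G (z n))) \<le> norm (z (Suc n) - z n)"
    by (rule grad_step_nonexp[OF A2_conv[OF i] A2_grad[OF i] A2_L[OF i] A2_lip[OF i]])
       (use lam_pos[of "Suc n"] lam_le_L[OF i, of "Suc n"] in auto)
  have 2: "norm ((lam n - lam (Suc n)) *\<^sub>R ?G (z n)) \<le> (lam n - lam (Suc n)) * Bg"
    using lam_dec[of n] Bg[OF i n] by (simp add: mult_left_mono)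
  have 3: "norm ((lam (Suc n) * \<beta> (Suc n)) *\<^sub>R d i (Suc n)) \<le> (lam n * \<beta> n) * Bd"
  proof -
    have "norm ((lam (Suc n) * \<beta> (Suc n)) *\<^sub>R d i (Suc n)) = (lam (Suc n) * \<beta> (Suc n)) * norm (d i (Suc n))"
      using lam_pos[of "Suc n"] beta_rng[of "Suc n"] by simp
    also have "\<dots> \<le> (lam n * \<beta> n) * Bd"
      using lam_pos[of "Suc n"] beta_rng[of "Suc n"] lam_dec[of n] beta_dec[of n] Bd[OF i, of "Suc n"] Bd_nn
      by (intro mult_mono) auto
    finally show ?thesis .
  qed
  have 4: "norm ((lam n * \<beta> n) *\<^sub>R d i n) \<le> (lam n * \<beta> n) * Bd"
    using lam_pos[of n] beta_rng[of n] Bd[OF i n] by (simp add: mult_left_mono)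
  have "norm (aa i (Suc n) - aa i n) \<le> norm ((z (Suc n) - lam (Suc n) *\<^sub>R ?G (z (Suc n))) - (z n - lam (Suc n) *\<^sub>R ?G (z n)))
      + norm ((lam n - lam (Suc n)) *\<^sub>R ?G (z n)) + norm ((lam (Suc n) * \<beta> (Suc n)) *\<^sub>R d i (Suc n)) + norm ((lam n * \<beta> n) *\<^sub>R d i n)"
    unfolding e by (smt (verit) norm_triangle_ineq norm_triangle_ineq4)
  then show ?thesis using 1 2 3 4 by linarith
qed

lemma y_diff: "i \<in> I \<Longrightarrow> n \<ge> 1 \<Longrightarrow>
   norm (y i (Suc n) - y i n) \<le> norm (aa i (Suc n) - aa i n) + (lam n - lam (Suc n)) / lam (Suc n) * Ba"
proof -
  assume i: "i \<in> I" and n: "n \<ge> 1"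
  have yy: "y i m = prox (lam m) (f i) (aa i m)" if "m \<ge> 1" for m using y_def[OF i that] by (simp add: aa_def)
  have "norm (y i (Suc n) - y i n) \<le> norm (aa i (Suc n) - aa i n) + \<bar>lam n - lam (Suc n)\<bar> / lam (Suc n) * norm (aa i (Suc n) - y i (Suc n))"
    using prox_diff[OF A1_cont[OF i] A1_conv[OF i] lam_pos[of "Suc n"] lam_pos[of n], of "aa i (Suc n)" "aa i n"]
    unfolding yy[OF n] yy[of "Suc n", simplified] by simp
  also have "\<dots> \<le> norm (aa i (Suc n) - aa i n) + (lam n - lam (Suc n)) / lam (Suc n) * Ba"
  proof -
    have nn: "(lam n - lam (Suc n)) / lam (Suc n) \<ge> 0" using lam_dec[of n] lam_pos[of "Suc n"] by simp
    have "norm (aa i (Suc n) - y i (Suc n)) \<le> Ba" using Ba[OF i, of "Suc n"] unfolding aa_def by simp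
    from mult_left_mono[OF this nn] show ?thesis using lam_dec[of n] by simp
  qed
  finally show ?thesis .
qed

lemma w_diff: "i \<in> I \<Longrightarrow> n \<ge> 1 \<Longrightarrow>
   norm (w i (Suc n) - w i n) \<le> \<bar>\<alpha> (Suc n) - \<alpha> n\<bar> * K1 + (1 - \<alpha> (Suc n)) * norm (y i (Suc n) - y i n)"
proof -
  assume i: "i \<in> I" and n: "n \<ge> 1"
  have e: "w i (Suc n) - w i n = (\<alpha> (Suc n) - \<alpha> n) *\<^sub>R (u i - T i (y i n)) + (1 - \<alpha> (Suc n)) *\<^sub>R (T i (y i (Suc n)) - T i (y i n))"
    unfolding w_def[OF i n] w_def[OF i, of "Suc n", simplified] by (simp add: algebra_simps)
  have "norm (w i (Suc n) - w i n) \<le> \<bar>\<alpha> (Suc n) - \<alpha> n\<bar> * norm (u i - T i (y i n)) + (1 - \<alpha> (Suc n)) * norm (T i (y i (Suc n)) - T i (y i n))"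
    unfolding e using alpha_rng[of "Suc n"] by (smt (verit) norm_scaleR norm_triangle_ineq)
  also have "\<dots> \<le> \<bar>\<alpha> (Suc n) - \<alpha> n\<bar> * K1 + (1 - \<alpha> (Suc n)) * norm (y i (Suc n) - y i n)"
    using alpha_rng[of "Suc n"] K1[OF i n] T_nonexp[OF i, of "y i (Suc n)" "y i n"]
    by (intro add_mono mult_left_mono) auto
  finally show ?thesis .
qed

definition RR where "RR n = (1 - \<alpha> (Suc n)) * (Dl n + 4 * Bx * \<theta> n + (lam n - lam (Suc n)) * Bg
    + 2 * (lam n * \<beta> n) * Bd + (lam n - lam (Suc n)) / lam (Suc n) * Ba) + \<bar>\<alpha> (Suc n) - \<alpha> n\<bar> * K1"

lemma Dl_step: "n \<ge> 1 \<Longrightarrow> Dl (Suc n) \<le> RR n"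
proof -
  assume n: "n \<ge> 1"
  have wb: "norm (w i (Suc n) - w i n) \<le> RR n" if i: "i \<in> I" for i
  proof -
    have "norm (y i (Suc n) - y i n) \<le> Dl n + 4 * Bx * \<theta> n + (lam n - lam (Suc n)) * Bg
      + 2 * (lam n * \<beta> n) * Bd + (lam n - lam (Suc n)) / lam (Suc n) * Ba"
      using y_diff[OF i n] a_diff[OF i n] z_diff[OF n] by linarith
    then have "(1 - \<alpha> (Suc n)) * norm (y i (Suc n) - y i n) \<le> (1 - \<alpha> (Suc n)) * (Dl n + 4 * Bx * \<theta> n + (lam n - lam (Suc n)) * Bg
      + 2 * (lam n * \<beta> n) * Bd + (lam n - lam (Suc n)) / lam (Suc n) * Ba)"
      using alpha_rng[of "Suc n"] by (intro mult_left_mono) auto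
    then show ?thesis using w_diff[OF i n] unfolding RR_def by linarith
  qed
  have "x (Suc (Suc n)) - x (Suc n) = (1 / real M) *\<^sub>R (\<Sum>i\<in>I. w i (Suc n) - w i n)"
    using x_def[OF n] x_def[of "Suc n"] by (simp add: sum_subtractf scaleR_diff_right)
  then show ?thesis unfolding Dl_def using avg_bound[of "\<lambda>i. w i (Suc n) - w i n", OF wb] by simp
qed

end


context lem6 begin

definition AA where "AA n = Dl n / lam n"
definition c2 where "c2 n = (1 / \<alpha> (Suc n)) * \<bar>1 / lam (Suc n) - 1 / lam n\<bar>"
definition c3 where "c3 n = (1 / lam (Suc n)) * \<bar>1 - \<alpha> n / \<alpha> (Suc n)\<bar>"
definition c5 where "c5 n = \<theta> n / (\<alpha> (Suc n) * lam (Suc n))"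
definition c7 where "c7 n = \<beta> n / \<alpha> (Suc n)"
definition dd where "dd n = (2 * Bx + Bg * lam 0 + Ba * \<sigma>) * c2 n + 4 * Bx * c5 n + 2 * Bd * \<sigma> * c7 n + K1 * c3 n"

lemma Dl_nn: "Dl n \<ge> 0" by (simp add: Dl_def)
lemma Dl_le: "Dl n \<le> 2 * Bx" unfolding Dl_def by (rule x_diff)
lemma Ba_nn: "Ba \<ge> 0" using Ba[of 1 1] M by (smt (verit) atLeastAtMost_iff norm_ge_zero order_refl)
lemma K1_nn: "K1 \<ge> 0" unfolding K1_def using Bu_nn BT_nn by simp

lemma AA_step: "n \<ge> 1 \<Longrightarrow> AA (Suc n) \<le> (1 - \<alpha> (Suc n)) * AA n + \<alpha> (Suc n) * dd n"
proof -
  assume n: "n \<ge> 1"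
  define l where "l = lam n"
  define l' where "l' = lam (Suc n)"
  define a where "a = \<alpha> n"
  define a' where "a' = \<alpha> (Suc n)"
  define q where "q = 1 / l' - 1 / l"
  define P where "P = 4 * Bx * \<theta> n + (l - l') * Bg + 2 * (l * \<beta> n) * Bd + (l - l') / l' * Ba"
  have l: "l > 0" "l' > 0" "l' \<le> l" "l \<le> lam 0" "l / l' \<le> \<sigma>"
    using lam_pos[of n] lam_pos[of "Suc n"] lam_dec[of n] lam_le0[of n] C6(2)[of n]
    by (auto simp: l_def l'_def)
  have a: "a' > 0" "a' \<le> 1" using alpha_rng[of "Suc n"] by (auto simp: a'_def)
  have q: "q \<ge> 0" using l by (simp add: q_def field_simps)
  have th: "\<theta> n \<ge> 0" "\<beta> n \<ge> 0" using theta_rng[of n] beta_rng[of n] by auto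
  have P: "P \<ge> 0" unfolding P_def using Bx_nn Bg_nn Bd_nn Ba_nn l th
    by (intro add_nonneg_nonneg mult_nonneg_nonneg) auto
  have F1: "Dl (Suc n) \<le> (1 - a') * Dl n + P + \<bar>a' - a\<bar> * K1"
  proof -
    have "Dl (Suc n) \<le> RR n" by (rule Dl_step[OF n])
    also have "RR n = (1 - a') * Dl n + (1 - a') * P + \<bar>a' - a\<bar> * K1"
      unfolding RR_def P_def l_def l'_def a_def a'_def by (simp add: algebra_simps)
    also have "(1 - a') * P \<le> P" using P a by (simp add: mult_left_le_one_le)
    finally show ?thesis by simp
  qed
  have F1': "Dl (Suc n) / l' \<le> (1 - a') * (Dl n / l') + P / l' + \<bar>a' - a\<bar> * K1 / l'"
  proof -
    have "Dl (Suc n) / l' \<le> ((1 - a') * Dl n + P + \<bar>a' - a\<bar> * K1) / l'"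
      using F1 l by (simp add: divide_right_mono)
    also have "\<dots> = (1 - a') * (Dl n / l') + P / l' + \<bar>a' - a\<bar> * K1 / l'"
      by (simp add: add_divide_distrib)
    finally show ?thesis .
  qed
  have F2: "(1 - a') * (Dl n / l') \<le> (1 - a') * AA n + 2 * Bx * q"
  proof -
    have e: "Dl n / l' = AA n + Dl n * q" using l by (simp add: AA_def l_def q_def field_simps)
    have "(1 - a') * (Dl n * q) \<le> Dl n * q" using a q Dl_nn by (simp add: mult_left_le_one_le)
    also have "\<dots> \<le> 2 * Bx * q" using Dl_le q by (simp add: mult_right_mono)
    finally show ?thesis unfolding e by (simp add: algebra_simps)
  qed
  have F3: "P / l' = 4 * Bx * (\<theta> n / l') + Bg * (l * q) + 2 * Bd * (\<beta> n * (l / l')) + Ba * ((l / l') * q)"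
    unfolding P_def q_def using l by (simp add: field_simps)
  have F4: "Bg * (l * q) \<le> Bg * lam 0 * q"
  proof -
    have "l * q \<le> lam 0 * q" using q l by (intro mult_right_mono) auto
    then show ?thesis using Bg_nn by (simp add: mult_left_mono mult.assoc)
  qed
  have F5: "2 * Bd * (\<beta> n * (l / l')) \<le> 2 * Bd * \<sigma> * \<beta> n"
  proof -
    have "\<beta> n * (l / l') \<le> \<beta> n * \<sigma>" using th l by (intro mult_left_mono) auto
    from mult_left_mono[OF this, of "2 * Bd"] show ?thesis using Bd_nn by (simp add: mult_ac)
  qed
  have F6: "Ba * ((l / l') * q) \<le> Ba * \<sigma> * q"
  proof -
    have "(l / l') * q \<le> \<sigma> * q" using q l by (intro mult_right_mono) auto
    from mult_left_mono[OF this, of Ba] show ?thesis using Ba_nn by (simp add: mult_ac)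
  qed
  have G: "a' * dd n = (2 * Bx + Bg * lam 0 + Ba * \<sigma>) * q + 4 * Bx * (\<theta> n / l') + 2 * Bd * \<sigma> * \<beta> n + K1 * (\<bar>a' - a\<bar> / l')"
  proof -
    have "a' * c2 n = q" using a q unfolding c2_def q_def l_def l'_def a'_def by simp
    moreover have "a' * c5 n = \<theta> n / l'" using a unfolding c5_def l'_def a'_def by simp
    moreover have "a' * c7 n = \<beta> n" using a unfolding c7_def a'_def by simp
    moreover have "a' * c3 n = \<bar>a' - a\<bar> / l'"
    proof -
      have "a' * \<bar>1 - a / a'\<bar> = \<bar>a' * (1 - a / a')\<bar>" using a by (simp add: abs_mult)
      also have "a' * (1 - a / a') = a' - a" using a by (simp add: field_simps)
      finally show ?thesis unfolding c3_def a_def[symmetric] a'_def[symmetric] l'_def[symmetric] by simp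
    qed
    moreover have "a' * dd n = (2 * Bx + Bg * lam 0 + Ba * \<sigma>) * (a' * c2 n) + 4 * Bx * (a' * c5 n) + 2 * Bd * \<sigma> * (a' * c7 n) + K1 * (a' * c3 n)"
      unfolding dd_def by (simp add: algebra_simps)
    ultimately show ?thesis by simp
  qed
  have "AA (Suc n) = Dl (Suc n) / l'" by (simp add: AA_def l'_def)
  also have "\<dots> \<le> (1 - a') * AA n + (2 * Bx + Bg * lam 0 + Ba * \<sigma>) * q + 4 * Bx * (\<theta> n / l') + 2 * Bd * \<sigma> * \<beta> n + \<bar>a' - a\<bar> * K1 / l'"
  proof -
    have "(2 * Bx + Bg * lam 0 + Ba * \<sigma>) * q = 2 * Bx * q + Bg * lam 0 * q + Ba * \<sigma> * q" by (simp add: algebra_simps)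
    then show ?thesis using F1' F2 F3 F4 F5 F6 by linarith
  qed
  also have "\<dots> = (1 - a') * AA n + a' * dd n" unfolding G by (simp add: algebra_simps)
  finally show ?thesis unfolding a'_def .
qed

end


context lem6 begin

lemma dd_lim: "dd \<longlonglongrightarrow> 0"
proof -
  have "c2 \<longlonglongrightarrow> 0" using C2 unfolding c2_def[abs_def] .
  moreover have "c3 \<longlonglongrightarrow> 0" using C3 unfolding c3_def[abs_def] .
  moreover have "c5 \<longlonglongrightarrow> 0" using C5 unfolding c5_def[abs_def] .
  moreover have "c7 \<longlonglongrightarrow> 0" using C7 unfolding c7_def[abs_def] .
  ultimately have "(\<lambda>n. (2 * Bx + Bg * lam 0 + Ba * \<sigma>) * c2 n + 4 * Bx * c5 n + 2 * Bd * \<sigma> * c7 n + K1 * c3 n) \<longlonglongrightarrow>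
      (2 * Bx + Bg * lam 0 + Ba * \<sigma>) * 0 + 4 * Bx * 0 + 2 * Bd * \<sigma> * 0 + K1 * 0"
    by (intro tendsto_intros)
  then show ?thesis unfolding dd_def[abs_def] by simp
qed

lemma div2: "filterlim (\<lambda>n. \<Sum>k\<le>n. \<alpha> (Suc (Suc k))) at_top sequentially"
proof -
  have e: "(\<Sum>k\<le>Suc (Suc n). \<alpha> k) = \<alpha> 0 + \<alpha> 1 + (\<Sum>k\<le>n. \<alpha> (Suc (Suc k)))" for n
    by (simp only: sum.atMost_Suc_shift) simp
  show ?thesis unfolding filterlim_at_top eventually_sequentially
  proof
    fix Z
    obtain N where N: "\<And>n. n \<ge> N \<Longrightarrow> (\<Sum>k\<le>n. \<alpha> k) \<ge> Z + \<alpha> 0 + \<alpha> 1"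
      using C1 unfolding filterlim_at_top eventually_sequentially by blast
    have "\<forall>n\<ge>N. Z \<le> (\<Sum>k\<le>n. \<alpha> (Suc (Suc k)))"
    proof (intro allI impI)
      fix n assume "n \<ge> N"
      then have "(\<Sum>k\<le>Suc (Suc n). \<alpha> k) \<ge> Z + \<alpha> 0 + \<alpha> 1" by (intro N) simp
      then show "Z \<le> (\<Sum>k\<le>n. \<alpha> (Suc (Suc k)))" unfolding e by simp
    qed
    then show "\<exists>N. \<forall>n\<ge>N. Z \<le> (\<Sum>k\<le>n. \<alpha> (Suc (Suc k)))" by blast
  qed
qed

lemma AA_lim: "AA \<longlonglongrightarrow> 0"
proof -
  have "(\<lambda>k. AA (Suc k)) \<longlonglongrightarrow> 0"
  proof (rule xu_lemma[where g = "\<lambda>k. \<alpha> (Suc (Suc k))" and d = "\<lambda>k. dd (Suc k)"])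
    show "\<And>n. 0 \<le> AA (Suc n)" unfolding AA_def using Dl_nn lam_pos by (simp add: less_imp_le)
    show "\<And>n. 0 \<le> \<alpha> (Suc (Suc n)) \<and> \<alpha> (Suc (Suc n)) \<le> 1" using alpha_rng by (simp add: less_imp_le)
    show "\<And>n. AA (Suc (Suc n)) \<le> (1 - \<alpha> (Suc (Suc n))) * AA (Suc n) + \<alpha> (Suc (Suc n)) * dd (Suc n)"
      by (rule AA_step) simp
    show "filterlim (\<lambda>n. \<Sum>k\<le>n. \<alpha> (Suc (Suc k))) at_top sequentially" by (rule div2)
    show "(\<lambda>k. dd (Suc k)) \<longlonglongrightarrow> 0" using LIMSEQ_Suc[OF dd_lim] .
  qed
  then show ?thesis by (rule LIMSEQ_imp_Suc)
qed

lemma part_a: "(\<lambda>n. norm (x (Suc n) - x n) / lam n) \<longlonglongrightarrow> 0 \<and> (\<lambda>n. norm (x (Suc n) - x n)) \<longlonglongrightarrow> 0"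
proof
  show 1: "(\<lambda>n. norm (x (Suc n) - x n) / lam n) \<longlonglongrightarrow> 0" using AA_lim unfolding AA_def[abs_def] Dl_def .
  have "(\<lambda>n. norm (x (Suc n) - x n) / lam n * lam n) \<longlonglongrightarrow> 0 * 0" by (intro tendsto_mult 1 lim0(2))
  moreover have "\<And>n. norm (x (Suc n) - x n) / lam n * lam n = norm (x (Suc n) - x n)"
    using lam_pos by (simp add: less_imp_neq[symmetric])
  ultimately show "(\<lambda>n. norm (x (Suc n) - x n)) \<longlonglongrightarrow> 0" by simp
qed

end



lemma sq_convex_vec:
  fixes p q :: "'a::real_inner"
  assumes "0 \<le> t" "t \<le> 1"
  shows "(norm (t *\<^sub>R p + (1 - t) *\<^sub>R q))\<^sup>2 \<le> t * (norm p)\<^sup>2 + (1 - t) * (norm q)\<^sup>2"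
proof -
  have "norm (t *\<^sub>R p + (1 - t) *\<^sub>R q) \<le> t * norm p + (1 - t) * norm q"
    using assms norm_triangle_ineq[of "t *\<^sub>R p" "(1 - t) *\<^sub>R q"] by simp
  then have "(norm (t *\<^sub>R p + (1 - t) *\<^sub>R q))\<^sup>2 \<le> (t * norm p + (1 - t) * norm q)\<^sup>2"
    by (intro power_mono) auto
  also have "\<dots> = t * (norm p)\<^sup>2 + (1 - t) * (norm q)\<^sup>2 - t * (1 - t) * (norm p - norm q)\<^sup>2"
    by (simp add: power2_eq_square algebra_simps)
  also have "\<dots> \<le> t * (norm p)\<^sup>2 + (1 - t) * (norm q)\<^sup>2" using assms by simp
  finally show ?thesis .
qed

context lem6 begin

lemma part_b_step:
  assumes xb: "xb \<in> S" and i: "i \<in> I" and n: "n \<ge> 1"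
  shows "(norm (w i n - xb))\<^sup>2
               \<le> (norm (x n - xb))\<^sup>2 + \<theta> n * (4 * Bx * (Bx + norm xb) + 4 * Bx\<^sup>2)
                 + 2 * lam n * (f i xb - f i (y i n))
                 + 2 * lam n * inner (d i (Suc n)) (y i n - xb)
                 + \<alpha> n * (norm (u i - xb))\<^sup>2
                 - (1 - \<alpha> n) * (norm (T i (y i n) - y i n))\<^sup>2
                 - (norm (z n - y i n))\<^sup>2"
proof -
  let ?y = "y i n" and ?Ty = "T i (y i n)" and ?z = "z n" and ?d = "d i (Suc n)"
  have Txb: "T i xb = xb" using xb i S_def by auto
  have al: "0 \<le> \<alpha> n" "\<alpha> n \<le> 1" using alpha_rng[of n] by auto
  have l: "lam n > 0" by (rule lam_pos)
  have "w i n - xb = \<alpha> n *\<^sub>R (u i - xb) + (1 - \<alpha> n) *\<^sub>R (?Ty - xb)"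
    unfolding w_def[OF i n] by (simp add: algebra_simps)
  then have s1: "(norm (w i n - xb))\<^sup>2 \<le> \<alpha> n * (norm (u i - xb))\<^sup>2 + (1 - \<alpha> n) * (norm (?Ty - xb))\<^sup>2"
    using sq_convex_vec[OF al] by simp
  have s2: "(norm (?Ty - xb))\<^sup>2 \<le> (norm (?y - xb))\<^sup>2 - (norm (?Ty - ?y))\<^sup>2"
  proof -
    define P where "P = ?Ty - xb"
    define Q where "Q = ?y - xb"
    have f: "(norm P)\<^sup>2 \<le> inner P Q" using A3[OF i] Txb unfolding firmly_nonexpansive_def P_def Q_def
      by metis
    have e1: "?Ty - ?y = P - Q" by (simp add: P_def Q_def)
    have "(norm (P - Q))\<^sup>2 = (norm P)\<^sup>2 - 2 * inner P Q + (norm Q)\<^sup>2"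
      unfolding power2_norm_eq_inner by (simp add: inner_diff_left inner_diff_right inner_commute)
    then show ?thesis unfolding e1 P_def[symmetric] Q_def[symmetric] using f by linarith
  qed
  have s3: "(norm (?y - xb))\<^sup>2 = (norm (?z - xb))\<^sup>2 - (norm (?z - ?y))\<^sup>2 + 2 * inner (?z - ?y) (xb - ?y)"
  proof -
    define A where "A = ?z - xb"
    define B where "B = ?z - ?y"
    have "?y - xb = A - B" "xb - ?y = B - A" by (simp_all add: A_def B_def)
    then show ?thesis unfolding A_def[symmetric] B_def[symmetric] power2_norm_eq_inner
      by (simp add: inner_diff_left inner_diff_right inner_commute)
  qed
  have s4: "inner (?z - ?y) (xb - ?y) \<le> lam n * (f i xb - f i ?y) + lam n * inner ?d (?y - xb)"
  proof -
    have "inner (?z + lam n *\<^sub>R ?d - ?y) (xb - ?y) \<le> lam n * (f i xb - f i ?y)"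
      by (rule prox_var[OF A1_cont[OF i] A1_conv[OF i] l y_def[OF i n]])
    moreover have "inner (?z + lam n *\<^sub>R ?d - ?y) (xb - ?y) = inner (?z - ?y) (xb - ?y) - lam n * inner ?d (?y - xb)"
      by (simp add: inner_diff_left inner_diff_right inner_add_left algebra_simps)
    ultimately show ?thesis by linarith
  qed
  have s5: "(norm (?z - xb))\<^sup>2 \<le> (norm (x n - xb))\<^sup>2 + \<theta> n * (4 * Bx * (Bx + norm xb) + 4 * Bx\<^sup>2)"
  proof -
    define V where "V = x n - xb"
    define E where "E = x n - x (n - 1)"
    have th: "0 \<le> \<theta> n" "\<theta> n < 1" using theta_rng[of n] by auto
    have ze: "?z - xb = V + \<theta> n *\<^sub>R E" unfolding z_def[OF n] V_def E_def by (simp add: algebra_simps)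
    have "(norm (V + \<theta> n *\<^sub>R E))\<^sup>2 = (norm V)\<^sup>2 + 2 * \<theta> n * inner V E + \<theta> n * (\<theta> n * (norm E)\<^sup>2)"
      unfolding power2_norm_eq_inner by (simp add: inner_add_left inner_add_right inner_commute algebra_simps)
    moreover have "inner V E \<le> 2 * Bx * (Bx + norm xb)"
    proof -
      have "inner V E \<le> norm V * norm E" by (rule norm_cauchy_schwarz)
      also have "\<dots> \<le> (Bx + norm xb) * (2 * Bx)"
        using Bx_nn Bx[of n] norm_triangle_ineq4[of "x n" xb] x_diff[of n "n - 1"]
        by (intro mult_mono) (auto simp: V_def E_def)
      finally show ?thesis by (simp add: algebra_simps)
    qed
    moreover have "\<theta> n * (norm E)\<^sup>2 \<le> 4 * Bx\<^sup>2"
    proof -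
      have "norm E \<le> 2 * Bx" unfolding E_def by (rule x_diff)
      then have "(norm E)\<^sup>2 \<le> (2 * Bx)\<^sup>2" by (intro power_mono) auto
      then have "\<theta> n * (norm E)\<^sup>2 \<le> 1 * (2 * Bx)\<^sup>2" using th by (intro mult_mono) auto
      then show ?thesis by (simp add: power2_eq_square)
    qed
    ultimately have "(norm (V + \<theta> n *\<^sub>R E))\<^sup>2 \<le> (norm V)\<^sup>2 + 2 * \<theta> n * (2 * Bx * (Bx + norm xb)) + \<theta> n * (4 * Bx\<^sup>2)"
      using th by (smt (verit) mult_left_mono)
    then show ?thesis unfolding ze V_def by (simp add: algebra_simps)
  qed
  have yn: "0 \<le> \<alpha> n * (norm (?y - xb))\<^sup>2" using al by simp
  have "(1 - \<alpha> n) * (norm (?Ty - xb))\<^sup>2 \<le> (1 - \<alpha> n) * ((norm (?y - xb))\<^sup>2 - (norm (?Ty - ?y))\<^sup>2)"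
    using s2 al by (intro mult_left_mono) auto
  also have "\<dots> = (norm (?y - xb))\<^sup>2 - \<alpha> n * (norm (?y - xb))\<^sup>2 - (1 - \<alpha> n) * (norm (?Ty - ?y))\<^sup>2"
    by (simp add: algebra_simps)
  finally have s12: "(1 - \<alpha> n) * (norm (?Ty - xb))\<^sup>2 \<le> (norm (?y - xb))\<^sup>2 - (1 - \<alpha> n) * (norm (?Ty - ?y))\<^sup>2"
    using yn by linarith
  have "2 * inner (?z - ?y) (xb - ?y) \<le> 2 * lam n * (f i xb - f i ?y) + 2 * lam n * inner ?d (?y - xb)"
    using s4 by simp
  then show ?thesis using s1 s12 s3 s5 by linarith
qed

lemma part_b: "\<forall>xb\<in>S. \<forall>i\<in>{1..M}. \<exists>D1 D2. D1 \<ge> 0 \<and> D2 \<ge> 0 \<and>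
            (\<forall>n\<ge>1. (norm (w i n - xb))\<^sup>2
               \<le> (norm (x n - xb))\<^sup>2 + \<theta> n * D1
                 + 2 * lam n * (f i xb - f i (y i n))
                 + 2 * lam n * inner (d i (Suc n)) (y i n - xb)
                 + \<alpha> n * D2
                 - (1 - \<alpha> n) * (norm (T i (y i n) - y i n))\<^sup>2
                 - (norm (z n - y i n))\<^sup>2)"
proof (intro ballI)
  fix xb i assume xb: "xb \<in> S" and i: "i \<in> {1..M}"
  show "\<exists>D1 D2. D1 \<ge> 0 \<and> D2 \<ge> 0 \<and>
            (\<forall>n\<ge>1. (norm (w i n - xb))\<^sup>2
               \<le> (norm (x n - xb))\<^sup>2 + \<theta> n * D1
                 + 2 * lam n * (f i xb - f i (y i n))
                 + 2 * lam n * inner (d i (Suc n)) (y i n - xb)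
                 + \<alpha> n * D2
                 - (1 - \<alpha> n) * (norm (T i (y i n) - y i n))\<^sup>2
                 - (norm (z n - y i n))\<^sup>2)"
    apply (rule exI[of _ "4 * Bx * (Bx + norm xb) + 4 * Bx\<^sup>2"])
    apply (rule exI[of _ "(norm (u i - xb))\<^sup>2"])
    using part_b_step[OF xb i] Bx_nn by simp
qed

end

theorem lemma6:
  fixes M :: nat
    and f h :: "nat \<Rightarrow> 'a::{real_inner, complete_space} \<Rightarrow> real"
    and gradh :: "nat \<Rightarrow> 'a \<Rightarrow> 'a"
    and L :: "nat \<Rightarrow> real"
    and T :: "nat \<Rightarrow> 'a \<Rightarrow> 'a"
    and S :: "'a set"
    and \<psi> :: "'a \<Rightarrow> real"
    and \<theta> lam \<beta> \<alpha> :: "nat \<Rightarrow> real"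
    and \<sigma> :: real
    and u :: "nat \<Rightarrow> 'a"
    and x z :: "nat \<Rightarrow> 'a"
    and d y w :: "nat \<Rightarrow> nat \<Rightarrow> 'a"
  assumes M: "M \<ge> 1"
    \<comment> \<open>(A1)\<close>
    and A1_cont: "\<And>i. i \<in> {1..M} \<Longrightarrow> continuous_on UNIV (f i)"
    and A1_conv: "\<And>i. i \<in> {1..M} \<Longrightarrow> convex_on UNIV (f i)"
    \<comment> \<open>(A2): gradh i is the gradient of h i, (1 / L i)-Lipschitz\<close>
    and A2_conv: "\<And>i. i \<in> {1..M} \<Longrightarrow> convex_on UNIV (h i)"
    and A2_grad: "\<And>i v. i \<in> {1..M} \<Longrightarrow>
                    (h i has_derivative (\<lambda>e. inner (gradh i v) e)) (at v)"
    and A2_L: "\<And>i. i \<in> {1..M} \<Longrightarrow> L i > 0"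
    and A2_lip: "\<And>i v v'. i \<in> {1..M} \<Longrightarrow>
                    norm (gradh i v - gradh i v') \<le> (1 / L i) * norm (v - v')"
    \<comment> \<open>(A3)\<close>
    and A3: "\<And>i. i \<in> {1..M} \<Longrightarrow> firmly_nonexpansive (T i)"
    \<comment> \<open>(A4)\<close>
    and S_def: "S = {v. \<forall>i\<in>{1..M}. T i v = v}"
    and S_ne: "S \<noteq> {}"
    and psi_def: "\<psi> = (\<lambda>v. \<Sum>i\<in>{1..M}. f i v + h i v)"
    and Omega_ne: "{xh \<in> S. \<forall>v\<in>S. \<psi> xh \<le> \<psi> v} \<noteq> {}"
    \<comment> \<open>Condition (C)\<close>
    and dec: "decseq \<theta>" "decseq lam" "decseq \<beta>" "decseq \<alpha>"
    and lim0: "\<theta> \<longlonglongrightarrow> 0" "lam \<longlonglongrightarrow> 0" "\<beta> \<longlonglongrightarrow> 0" "\<alpha> \<longlonglongrightarrow> 0"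
    and theta_rng: "\<And>n. 0 \<le> \<theta> n \<and> \<theta> n < 1"
    and lam_rng: "\<And>n. 0 < lam n \<and> lam n \<le> 2 * Min (L ` {1..M})"
    and beta_rng: "\<And>n. 0 < \<beta> n \<and> \<beta> n \<le> 1"
    and alpha_rng: "\<And>n. 0 < \<alpha> n \<and> \<alpha> n \<le> 1"
    and C1: "filterlim (\<lambda>n. \<Sum>k\<le>n. \<alpha> k) at_top sequentially"
    and C2: "(\<lambda>n. (1 / \<alpha> (Suc n)) * \<bar>1 / lam (Suc n) - 1 / lam n\<bar>) \<longlonglongrightarrow> 0"
    and C3: "(\<lambda>n. (1 / lam (Suc n)) * \<bar>1 - \<alpha> n / \<alpha> (Suc n)\<bar>) \<longlonglongrightarrow> 0"
    and C4: "(\<lambda>n. \<alpha> n / lam n) \<longlonglongrightarrow> 0"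
    and C5: "(\<lambda>n. \<theta> n / (\<alpha> (Suc n) * lam (Suc n))) \<longlonglongrightarrow> 0"
    and C6: "\<sigma> \<ge> 1" "\<And>n. lam n / lam (Suc n) \<le> \<sigma>"
    and C7: "(\<lambda>n. \<beta> n / \<alpha> (Suc n)) \<longlonglongrightarrow> 0"
    \<comment> \<open>The algorithm (z 0, x 0, x 1, u i arbitrary); w i n stands for w^{(i+1)}_n\<close>
    and d1: "\<And>i. i \<in> {1..M} \<Longrightarrow> d i 1 = - gradh i (z 0)"
    and z_def: "\<And>n. n \<ge> 1 \<Longrightarrow> z n = x n + \<theta> n *\<^sub>R (x n - x (n - 1))"
    and d_def: "\<And>i n. i \<in> {1..M} \<Longrightarrow> n \<ge> 1 \<Longrightarrow>
                  d i (Suc n) = - gradh i (z n) + \<beta> n *\<^sub>R d i n"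
    and y_def: "\<And>i n. i \<in> {1..M} \<Longrightarrow> n \<ge> 1 \<Longrightarrow>
                  y i n = prox (lam n) (f i) (z n + lam n *\<^sub>R d i (Suc n))"
    and w_def: "\<And>i n. i \<in> {1..M} \<Longrightarrow> n \<ge> 1 \<Longrightarrow>
                  w i n = \<alpha> n *\<^sub>R u i + (1 - \<alpha> n) *\<^sub>R T i (y i n)"
    and x_def: "\<And>n. n \<ge> 1 \<Longrightarrow>
                  x (Suc n) = (1 / real M) *\<^sub>R (\<Sum>i\<in>{1..M}. w i n)"
    \<comment> \<open>boundedness of the y-sequences\<close>
    and y_bdd: "\<And>i. i \<in> {1..M} \<Longrightarrow> bounded (y i ` {1..})"
  shows "(\<lambda>n. norm (x (Suc n) - x n) / lam n) \<longlonglongrightarrow> 0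
       \<and> (\<lambda>n. norm (x (Suc n) - x n)) \<longlonglongrightarrow> 0
       \<and> (\<forall>xb\<in>S. \<forall>i\<in>{1..M}. \<exists>D1 D2. D1 \<ge> 0 \<and> D2 \<ge> 0 \<and>
            (\<forall>n\<ge>1. (norm (w i n - xb))\<^sup>2
               \<le> (norm (x n - xb))\<^sup>2 + \<theta> n * D1
                 + 2 * lam n * (f i xb - f i (y i n))
                 + 2 * lam n * inner (d i (Suc n)) (y i n - xb)
                 + \<alpha> n * D2
                 - (1 - \<alpha> n) * (norm (T i (y i n) - y i n))\<^sup>2
                 - (norm (z n - y i n))\<^sup>2))"
proof -
  interpret lem6 M f h gradh L T S \<psi> \<theta> lam \<beta> \<alpha> \<sigma> u x z d y w
    by unfold_locales (fact assms)+
  show ?thesis using part_a part_b by blast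
qed

end
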